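(* Let $d\ge1$ and let $\theta\in\mathbb R^d$ be split into $B$ disjoint blocks $\theta^{(1)},\dots,\theta^{(B)}$ of sizes $d_1,\dots,d_B\ge1$ with $d_1+\dots+d_B=d$. Let $R_b=-(d_b-2)_+$ and $\pi_{\mathrm{MBS}}(\theta)=\prod_{b=1}^B\|\theta^{(b)}\|^{R_b}\cdot\|\theta\|^{-\gamma}$. For $N>0$ let $p(y\mid\theta)$ be the density of $\mathrm N_d(\theta,N^{-1}I_d)$. If $0\le\gamma<B(R_b+d_b)$ for every $b$, then $m_{\mathrm{MBS}}(y)=\int p(y\mid\theta)\pi_{\mathrm{MBS}}(\theta)\,\mathrm d\theta<\infty$ for every $y\in\mathbb R^d$.
   Context: $(x)_+=\max(x,0)$. *)

theory Defs
  imports "HOL-Analysis.Analysis"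
begin

definition pos_part :: "real \<Rightarrow> real" where
  "pos_part x = max x 0"

definition block_norm :: "'n::finite set \<Rightarrow> real^'n \<Rightarrow> real" where
  "block_norm I \<theta> = sqrt (\<Sum>i\<in>I. (\<theta> $ i)\<^sup>2)"

definition R_exp :: "nat \<Rightarrow> real" where
  "R_exp db = - pos_part (real db - 2)"

definition pi_MBS :: "nat \<Rightarrow> (nat \<Rightarrow> 'n::finite set) \<Rightarrow> real \<Rightarrow> real^'n \<Rightarrow> real" where
  "pi_MBS B I \<gamma> \<theta> =
     (\<Prod>b\<in>{1..B}. block_norm (I b) \<theta> powr R_exp (card (I b))) * norm \<theta> powr (- \<gamma>)"

definition normal_density :: "real \<Rightarrow> real^'n::finite \<Rightarrow> real^'n \<Rightarrow> real" where
  "normal_density N \<theta> y =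
     (N / (2 * pi)) powr (real CARD('n) / 2) * exp (- (N / 2) * (norm (y - \<theta>))\<^sup>2)"

definition m_MBS :: "real \<Rightarrow> nat \<Rightarrow> (nat \<Rightarrow> 'n::finite set) \<Rightarrow> real \<Rightarrow> real^'n \<Rightarrow> ennreal" where
  "m_MBS N B I \<gamma> y =
     (\<integral>\<^sup>+ \<theta>. ennreal (normal_density N \<theta> y * pi_MBS B I \<gamma> \<theta>) \<partial>lborel)"

end

theory Submission
  imports Defs "HOL-Probability.Distributions"
begin


lemma gauss_integrable:
  fixes c m :: real assumes c: "c > 0"
  shows "integrable lborel (\<lambda>t. exp (- c * (m - t)\<^sup>2))"
proof -
  define \<sigma> where "\<sigma> = 1 / sqrt (2 * c)"
  have s: "\<sigma> > 0" using c by (simp add: \<sigma>_def)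
  have s2: "2 * \<sigma>\<^sup>2 = 1 / c" using c by (simp add: \<sigma>_def power_divide)
  define K where "K = 1 / sqrt (2 * pi * \<sigma>\<^sup>2)"
  have K: "K > 0" using s by (simp add: K_def)
  have eq: "exp (- c * (m - t)\<^sup>2) = Distributions.normal_density m \<sigma> t / K" for t
  proof -
    have "-(t - m)\<^sup>2/ (2 * \<sigma>\<^sup>2) = - c * (m - t)\<^sup>2" using s2 c
      by (simp add: power2_commute)
    then show ?thesis using K s unfolding Distributions.normal_density_def K_def[symmetric]
      by simp
  qed
  show ?thesis unfolding eq using s by (intro integrable_divide_zero integrable_normal_density) auto
qed

lemma powr_abs_has_integral:
  fixes e :: real assumes e: "e > -1"
  shows "((\<lambda>t. \<bar>t\<bar> powr e) has_integral (2 / (e + 1))) {-1..1}"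
proof -
  have h0: "((\<lambda>t. t powr e) has_integral (1 / (e + 1))) {0..1}"
    using has_integral_powr_from_0[OF e, of 1] by simp
  have h1: "((\<lambda>t. \<bar>t\<bar> powr e) has_integral (1 / (e + 1))) {0..1}"
    by (rule has_integral_cong[THEN iffD1, OF _ h0]) auto
  have h2: "((\<lambda>t. \<bar>t\<bar> powr e) has_integral (1 / (e + 1))) {-1..0}"
  proof -
    have "((\<lambda>x. (\<lambda>t. \<bar>t\<bar> powr e) (-x)) has_integral (1 / (e + 1))) {-1..-0}"
      using h1 by (subst has_integral_reflect_real) 
    then show ?thesis by simp
  qed
  have "((\<lambda>t. \<bar>t\<bar> powr e) has_integral (1 / (e + 1) + 1 / (e + 1))) {-1..1}"
    by (rule has_integral_combine[OF _ _ h2 h1]) auto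
  then show ?thesis by simp
qed

lemma one_dim_finite:
  fixes e c m :: real assumes e: "e > -1" "e \<le> 0" and c: "c > 0"
  shows "(\<integral>\<^sup>+t. ennreal (\<bar>t\<bar> powr e * exp (- c * (m - t)\<^sup>2)) \<partial>lborel) < \<infinity>"
proof -
  define g where "g t = indicator {-1..1} t * \<bar>t\<bar> powr e + exp (- c * (m - t)\<^sup>2)" for t :: real
  have "((\<lambda>t. indicator {-1..1} t * \<bar>t\<bar> powr e) has_integral (2 / (e + 1))) UNIV"
  proof -
    have eq: "(\<lambda>t. indicator {-1..1} t * \<bar>t\<bar> powr e) = (\<lambda>t. if t \<in> {-1..1} then \<bar>t\<bar> powr e else 0)"
      by (auto simp: indicator_def)
    show ?thesis unfolding eq has_integral_restrict_UNIV by (rule powr_abs_has_integral[OF e(1)])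
  qed
  then have "integral\<^sup>N lborel (\<lambda>t. indicator {-1..1} t * \<bar>t\<bar> powr e) = 2 / (e + 1)"
    by (intro nn_integral_has_integral_lborel) auto
  then have i1: "integrable lborel (\<lambda>t. indicator {-1..1} t * \<bar>t\<bar> powr e)"
    by (intro integrableI_nonneg) auto
  have "integrable lborel g" unfolding g_def
    by (intro Bochner_Integration.integrable_add i1 gauss_integrable c)
  then have fin: "(\<integral>\<^sup>+t. ennreal (g t) \<partial>lborel) < \<infinity>"
    using integrableD(2) by (simp add: less_top)
  have "(\<integral>\<^sup>+t. ennreal (\<bar>t\<bar> powr e * exp (- c * (m - t)\<^sup>2)) \<partial>lborel) \<le> (\<integral>\<^sup>+t. ennreal (g t) \<partial>lborel)"
  proof (intro nn_integral_mono ennreal_leI)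
    fix t :: real
    show "\<bar>t\<bar> powr e * exp (- c * (m - t)\<^sup>2) \<le> g t"
    proof (cases "\<bar>t\<bar> \<le> 1")
      case True
      have "exp (- c * (m - t)\<^sup>2) \<le> 1" using c by simp
      then have "\<bar>t\<bar> powr e * exp (- c * (m - t)\<^sup>2) \<le> \<bar>t\<bar> powr e"
        by (simp add: mult_left_le)
      moreover have "0 \<le> exp (- c * (m - t)\<^sup>2)" by simp
      ultimately show ?thesis using True unfolding g_def indicator_def by (auto simp: abs_le_iff intro: add_increasing2)
    next
      case False
      have "\<bar>t\<bar> powr e \<le> 1" using False e powr_mono2' [of e 1 "\<bar>t\<bar>"] by simp
      then have "\<bar>t\<bar> powr e * exp (- c * (m - t)\<^sup>2) \<le> exp (- c * (m - t)\<^sup>2)"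
        by (simp add: mult_left_le_one_le)
      then show ?thesis using False unfolding g_def indicator_def by (auto simp: abs_le_iff)
    qed
  qed
  with fin show ?thesis by (simp add: order_le_less_trans)
qed



lemma nn_integral_vec_prod:
  fixes f :: "'n::finite \<Rightarrow> real \<Rightarrow> ennreal"
  assumes [measurable]: "\<And>i. f i \<in> borel_measurable borel"
  shows "(\<integral>\<^sup>+x. (\<Prod>i\<in>UNIV. f i (x$i)) \<partial>(lborel::(real^'n) measure)) = (\<Prod>i\<in>UNIV. \<integral>\<^sup>+t. f i t \<partial>lborel)"
proof -
  define F where "F b = f (SOME i. b = axis i (1::real))" for b :: "real^'n"
  have BU: "(Basis :: (real^'n) set) = (\<lambda>i. axis i 1) ` UNIV"
    by (auto simp: Basis_vec_def)
  have inj: "inj (\<lambda>i::'n. axis i (1::real))"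
    by (auto simp: inj_def axis_eq_axis)
  have Fi: "F (axis i 1) = f i" for i
  proof -
    have "(SOME j. axis i (1::real) = axis j 1) = i"
      by (rule some_equality) (auto simp: axis_eq_axis)
    then show ?thesis by (simp add: F_def)
  qed
  have "(\<Prod>i\<in>UNIV. f i (x$i)) = (\<Prod>b\<in>Basis. F b (x \<bullet> b))" for x :: "real^'n"
    unfolding BU by (subst prod.reindex[OF inj]) (simp add: Fi inner_axis)
  moreover have "(\<Prod>i\<in>UNIV. \<integral>\<^sup>+t. f i t \<partial>lborel) = (\<Prod>b\<in>(Basis::(real^'n) set). \<integral>\<^sup>+t. F b t \<partial>lborel)"
    unfolding BU by (subst prod.reindex[OF inj]) (simp add: Fi)
  moreover have "(\<integral>\<^sup>+x. (\<Prod>b\<in>Basis. F b (x \<bullet> b)) \<partial>(lborel::(real^'n) measure)) = (\<Prod>b\<in>(Basis::(real^'n) set). \<integral>\<^sup>+t. F b t \<partial>lborel)"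
  proof (rule nn_integral_lborel_prod)
    fix b :: "real^'n" assume "b \<in> Basis"
    then obtain i where "b = axis i 1" unfolding BU by auto
    then show "F b \<in> borel_measurable borel" by (simp add: Fi)
  qed auto
  ultimately show ?thesis by simp
qed

lemma AE_coords_nonzero: "AE x in (lborel::(real^'n::finite) measure). \<forall>i\<in>UNIV. x$i \<noteq> 0"
proof (rule AE_finite_allI)
  fix i :: 'n
  have "{x::real^'n. x$i = 0} \<in> null_sets lebesgue"
    using negligible_standard_hyperplane_cart negligible_iff_null_sets by blast
  moreover have "{x::real^'n. x$i = 0} \<in> sets lborel"
    by measurable
  ultimately have N: "{x::real^'n. x$i = 0} \<in> null_sets lborel"
    using null_sets_completion_iff by blast
  show "AE x in lborel. x$i \<noteq> (0::real)"
    by (rule eventually_mono[OF AE_not_in[OF N]]) auto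
qed simp


theorem lemma10:
  fixes B :: nat and I :: "nat \<Rightarrow> 'n::finite set" and \<gamma> N :: real and y :: "real^'n"
  assumes nonempty: "\<forall>b\<in>{1..B}. I b \<noteq> {}"
    and disjoint: "\<forall>b\<in>{1..B}. \<forall>c\<in>{1..B}. b \<noteq> c \<longrightarrow> I b \<inter> I c = {}"
    and cover: "(\<Union>b\<in>{1..B}. I b) = UNIV"
    and N_pos: "N > 0"
    and gamma_nonneg: "0 \<le> \<gamma>"
    and gamma_bound: "\<forall>b\<in>{1..B}. \<gamma> < real B * (R_exp (card (I b)) + real (card (I b)))"
  shows "m_MBS N B I \<gamma> y < \<infinity>"
proof -
  have B1: "B \<ge> 1"
  proof (rule ccontr)
    assume "\<not> B \<ge> 1"
    then have "{1..B} = {}" by auto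
    then show False using cover by auto
  qed
  define blk where "blk i = (THE b. b \<in> {1..B} \<and> i \<in> I b)" for i
  have blk: "blk i = b" if "b \<in> {1..B}" "i \<in> I b" for i b
    unfolding blk_def
  proof (rule the_equality)
    show "b \<in> {1..B} \<and> i \<in> I b" using that by auto
    fix c assume "c \<in> {1..B} \<and> i \<in> I c"
    then show "c = b" using disjoint that by blast
  qed
  have blk_in: "blk i \<in> {1..B} \<and> i \<in> I (blk i)" for i
  proof -
    obtain b where "b \<in> {1..B}" "i \<in> I b" using cover by blast
    then show ?thesis using blk by simp
  qed
  define a where "a b = R_exp (card (I b)) - \<gamma> / real B" for b
  define e where "e i = a (blk i) / real (card (I (blk i)))" for i
  have cardpos: "card (I b) > 0" if "b \<in> {1..B}" for b
    using nonempty that by (simp add: card_gt_0_iff)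
  have a_le: "a b \<le> 0" for b
  proof -
    have "R_exp (card (I b)) \<le> 0" by (simp add: R_exp_def pos_part_def)
    moreover have "\<gamma> / real B \<ge> 0" using gamma_nonneg by simp
    ultimately show ?thesis by (simp add: a_def)
  qed
  have a_gt: "a b > - real (card (I b))" if "b \<in> {1..B}" for b
  proof -
    have "\<gamma> < real B * (R_exp (card (I b)) + real (card (I b)))" using gamma_bound that by blast
    then have "\<gamma> / real B < R_exp (card (I b)) + real (card (I b))"
      using B1 by (simp add: divide_less_eq mult.commute)
    then show ?thesis by (simp add: a_def)
  qed
  have e_le: "e i \<le> 0" for i
    unfolding e_def using a_le by (simp add: divide_nonpos_nonneg)
  have e_gt: "e i > -1" for i
  proof -
    have c: "real (card (I (blk i))) > 0" using cardpos blk_in by simp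
    have "a (blk i) > - real (card (I (blk i)))" using a_gt blk_in by blast
    then show ?thesis using c unfolding e_def by (simp add: less_divide_eq)
  qed
  define K where "K = (N / (2 * pi)) powr (real CARD('n) / 2)"
  have K0: "K \<ge> 0" by (simp add: K_def)
  define h where "h i t = \<bar>t\<bar> powr e i * exp (- (N / 2) * (y$i - t)\<^sup>2)" for i t
  have h0: "h i t \<ge> 0" for i t by (simp add: h_def)
  have normsq: "(norm x)\<^sup>2 = (\<Sum>i\<in>UNIV. (x$i)\<^sup>2)" for x :: "real^'n"
  proof -
    have "(norm x)\<^sup>2 = (\<Sum>i\<in>UNIV. (norm (x$i))\<^sup>2)"
      unfolding norm_vec_def L2_set_def by (rule real_sqrt_pow2) (intro sum_nonneg, simp)
    then show ?thesis by simp
  qed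
  have pw: "Defs.normal_density N \<theta> y * pi_MBS B I \<gamma> \<theta> \<le> K * (\<Prod>i\<in>UNIV. h i (\<theta>$i))"
    if nz: "\<forall>i\<in>UNIV. \<theta>$i \<noteq> 0" for \<theta>
  proof -
    define bn where "bn b = block_norm (I b) \<theta>" for b
    have comp_le: "\<bar>\<theta>$i\<bar> \<le> bn b" if "i \<in> I b" for i b
    proof -
      have "(\<theta>$i)\<^sup>2 \<le> (\<Sum>j\<in>I b. (\<theta>$j)\<^sup>2)"
        using that by (intro member_le_sum) auto
      then have "sqrt ((\<theta>$i)\<^sup>2) \<le> bn b"
        unfolding bn_def block_norm_def by (rule real_sqrt_le_mono)
      then show ?thesis by simp
    qed
    have bn_pos: "bn b > 0" if "b \<in> {1..B}" for b
    proof -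
      have "I b \<noteq> {}" using nonempty that by simp
      then obtain i where i: "i \<in> I b" by blast
      have "\<bar>\<theta>$i\<bar> \<le> bn b" by (rule comp_le[OF i])
      moreover have "0 < \<bar>\<theta>$i\<bar>" using nz by simp
      ultimately show ?thesis by linarith
    qed
    have bn_le: "bn b \<le> norm \<theta>" for b
    proof -
      have "(\<Sum>j\<in>I b. (\<theta>$j)\<^sup>2) \<le> (\<Sum>j\<in>UNIV. (\<theta>$j)\<^sup>2)"
        by (intro sum_mono2) auto
      then have "bn b \<le> sqrt ((norm \<theta>)\<^sup>2)"
        unfolding bn_def block_norm_def normsq by (rule real_sqrt_le_mono)
      then show ?thesis by simp
    qed
    have normpos: "norm \<theta> > 0"
    proof -
      obtain b where "b \<in> {1..B}" using B1 by auto
      then show ?thesis using bn_pos bn_le by (meson less_le_trans)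
    qed
    have step1: "norm \<theta> powr (- \<gamma>) \<le> (\<Prod>b\<in>{1..B}. bn b powr (- \<gamma> / real B))"
    proof -
      have "(\<Sum>b\<in>{1..B}. - \<gamma> / real B) = - \<gamma>" using B1 by simp
      then have "norm \<theta> powr (- \<gamma>) = (\<Prod>b\<in>{1..B}. norm \<theta> powr (- \<gamma> / real B))"
        using powr_sum[of "norm \<theta>" "\<lambda>b. - \<gamma> / real B" "{1..B}"] normpos by simp
      also have "\<dots> \<le> (\<Prod>b\<in>{1..B}. bn b powr (- \<gamma> / real B))"
      proof (rule prod_mono)
        fix b assume b: "b \<in> {1..B}"
        show "0 \<le> norm \<theta> powr (- \<gamma> / real B) \<and> norm \<theta> powr (- \<gamma> / real B) \<le> bn b powr (- \<gamma> / real B)"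
          using powr_mono2'[of "- \<gamma> / real B" "bn b" "norm \<theta>"] bn_pos[OF b] bn_le gamma_nonneg
          by (simp add: divide_nonpos_nonneg)
      qed
      finally show ?thesis .
    qed
    have step2: "pi_MBS B I \<gamma> \<theta> \<le> (\<Prod>b\<in>{1..B}. bn b powr a b)"
    proof -
      have "pi_MBS B I \<gamma> \<theta> = (\<Prod>b\<in>{1..B}. bn b powr R_exp (card (I b))) * norm \<theta> powr (- \<gamma>)"
        by (simp add: pi_MBS_def bn_def)
      also have "\<dots> \<le> (\<Prod>b\<in>{1..B}. bn b powr R_exp (card (I b))) * (\<Prod>b\<in>{1..B}. bn b powr (- \<gamma> / real B))"
        by (intro mult_left_mono step1 prod_nonneg) auto
      also have "\<dots> = (\<Prod>b\<in>{1..B}. bn b powr R_exp (card (I b)) * bn b powr (- \<gamma> / real B))"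
        by (simp add: prod.distrib)
      also have "\<dots> = (\<Prod>b\<in>{1..B}. bn b powr a b)"
        by (intro prod.cong refl) (simp add: a_def powr_add[symmetric])
      finally show ?thesis .
    qed
    have step3: "bn b powr a b \<le> (\<Prod>i\<in>I b. \<bar>\<theta>$i\<bar> powr e i)" if b: "b \<in> {1..B}" for b
    proof -
      have c: "real (card (I b)) > 0" using cardpos[OF b] by simp
      have "(\<Sum>i\<in>I b. a b / real (card (I b))) = a b" using c by (simp add: card_gt_0_iff)
      then have "bn b powr a b = (\<Prod>i\<in>I b. bn b powr (a b / real (card (I b))))"
        using powr_sum[of "bn b" "\<lambda>i. a b / real (card (I b))" "I b"] bn_pos[OF b] by simp
      also have "\<dots> \<le> (\<Prod>i\<in>I b. \<bar>\<theta>$i\<bar> powr (a b / real (card (I b))))"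
      proof (rule prod_mono)
        fix i assume i: "i \<in> I b"
        have "a b / real (card (I b)) \<le> 0" using a_le c by (simp add: divide_nonpos_pos)
        then show "0 \<le> bn b powr (a b / real (card (I b))) \<and> bn b powr (a b / real (card (I b))) \<le> \<bar>\<theta>$i\<bar> powr (a b / real (card (I b)))"
          using powr_mono2'[of "a b / real (card (I b))" "\<bar>\<theta>$i\<bar>" "bn b"] comp_le[OF i] nz by simp
      qed
      also have "\<dots> = (\<Prod>i\<in>I b. \<bar>\<theta>$i\<bar> powr e i)"
        by (intro prod.cong refl) (simp add: e_def blk[OF b])
      finally show ?thesis .
    qed
    have step4: "(\<Prod>b\<in>{1..B}. \<Prod>i\<in>I b. \<bar>\<theta>$i\<bar> powr e i) = (\<Prod>i\<in>UNIV. \<bar>\<theta>$i\<bar> powr e i)"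
      using prod.UNION_disjoint[of "{1..B}" I "\<lambda>i. \<bar>\<theta>$i\<bar> powr e i"] disjoint cover by simp
    have piB: "pi_MBS B I \<gamma> \<theta> \<le> (\<Prod>i\<in>UNIV. \<bar>\<theta>$i\<bar> powr e i)"
    proof -
      have "(\<Prod>b\<in>{1..B}. bn b powr a b) \<le> (\<Prod>b\<in>{1..B}. \<Prod>i\<in>I b. \<bar>\<theta>$i\<bar> powr e i)"
        by (intro prod_mono conjI step3) auto
      then show ?thesis using step2 step4 by simp
    qed
    have gauss: "exp (- (N / 2) * (norm (y - \<theta>))\<^sup>2) = (\<Prod>i\<in>UNIV. exp (- (N / 2) * (y$i - \<theta>$i)\<^sup>2))"
      by (simp add: normsq sum_distrib_left exp_sum)
    have "Defs.normal_density N \<theta> y * pi_MBS B I \<gamma> \<theta> = K * exp (- (N / 2) * (norm (y - \<theta>))\<^sup>2) * pi_MBS B I \<gamma> \<theta>"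
      by (simp add: Defs.normal_density_def K_def)
    also have "\<dots> \<le> K * exp (- (N / 2) * (norm (y - \<theta>))\<^sup>2) * (\<Prod>i\<in>UNIV. \<bar>\<theta>$i\<bar> powr e i)"
      by (intro mult_left_mono piB) (use K0 in auto)
    also have "\<dots> = K * (\<Prod>i\<in>UNIV. h i (\<theta>$i))"
    proof -
      have "(\<Prod>i\<in>UNIV. h i (\<theta>$i)) = (\<Prod>i\<in>UNIV. \<bar>\<theta>$i\<bar> powr e i) * (\<Prod>i\<in>UNIV. exp (- (N / 2) * (y$i - \<theta>$i)\<^sup>2))"
        unfolding h_def by (rule prod.distrib)
      then show ?thesis unfolding gauss by (simp only: mult_ac)
    qed
    finally show ?thesis .
  qed
  have hm[measurable]: "(\<lambda>t. ennreal (h i t)) \<in> borel_measurable borel" for i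
    unfolding h_def by measurable
  have "m_MBS N B I \<gamma> y \<le> (\<integral>\<^sup>+\<theta>. ennreal (K * (\<Prod>i\<in>UNIV. h i (\<theta>$i))) \<partial>lborel)"
    unfolding m_MBS_def
    by (rule nn_integral_mono_AE[OF eventually_mono[OF AE_coords_nonzero]]) (auto intro!: ennreal_leI pw)
  also have "\<dots> = (\<integral>\<^sup>+\<theta>. ennreal K * (\<Prod>i\<in>UNIV. ennreal (h i (\<theta>$i))) \<partial>lborel)"
    by (intro nn_integral_cong) (simp add: ennreal_mult K0 prod_nonneg h0 prod_ennreal)
  also have "\<dots> = ennreal K * (\<integral>\<^sup>+\<theta>. (\<Prod>i\<in>UNIV. ennreal (h i (\<theta>$i))) \<partial>lborel)"
    by (rule nn_integral_cmult) measurable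
  also have "\<dots> = ennreal K * (\<Prod>i\<in>UNIV. \<integral>\<^sup>+t. ennreal (h i t) \<partial>lborel)"
    by (subst nn_integral_vec_prod) auto
  also have "\<dots> < \<infinity>"
  proof -
    have "(\<integral>\<^sup>+t. ennreal (h i t) \<partial>lborel) < \<infinity>" for i
    proof -
      have "(\<integral>\<^sup>+t. ennreal (h i t) \<partial>lborel) = (\<integral>\<^sup>+t. ennreal (\<bar>t\<bar> powr e i * exp (- (N/2) * (y$i - t)\<^sup>2)) \<partial>lborel)"
        by (simp add: h_def)
      then show ?thesis using one_dim_finite[OF e_gt[of i] e_le[of i], of "N/2" "y$i"] N_pos by simp
    qed
    then have fi: "(\<integral>\<^sup>+t. ennreal (h i t) \<partial>lborel) \<noteq> top" for i by (simp add: less_top)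
    have "(\<Prod>i\<in>UNIV. \<integral>\<^sup>+t. ennreal (h i t) \<partial>lborel) \<noteq> top"
      unfolding ennreal_prod_eq_top using fi by blast
    then show ?thesis by (simp add: ennreal_mult_less_top less_top)
  qed
  finally show ?thesis .
qed

end
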